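(* Let $a(j,x)\ge0$, $j=1,\dots,N$, be densities with respect to $\mu$, $b\ge0$ a function, and $\beta_j=\int a(j,x)b(x)\,d\mu(x)$. Let $(\rho(j,\cdot))_{j}$ be proposal densities and $M_j\ge\sup_x a(j,x)b(x)/\rho(j,x)$ bounds, and let $(\tau_j)$ be a probability distribution on $\{1,\dots,N\}$ with all $\tau_j>0$. Consider the accept–reject scheme which draws $J\sim(\tau_j)$, then $X\sim\rho(J,\cdot)$, and accepts $(J,X)=(j,x)$ with probability $\pi(j,x)=\frac{a(j,x)b(x)}{M\tau_j\rho(j,x)}$, where $M=\max_j M_j/\tau_j$. Then the average acceptance probability is at most $\sum_j\beta_j/\sum_jM_j$, with equality if and only if $\tau_j\propto M_j$.
   Context: The scheme targets the density $f^N(x)\propto b(x)\sum_{j=1}^Na(j,x)$; the average acceptance probability is $\sum_j\int\pi(j,x)\tau_j\rho(j,x)\,d\mu(x)$. *)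

theory Defs
  imports "HOL-Analysis.Analysis"
begin

definition Mmax :: "nat \<Rightarrow> (nat \<Rightarrow> real) \<Rightarrow> (nat \<Rightarrow> real) \<Rightarrow> real" where
  "Mmax N Mb \<tau> = Max ((\<lambda>j. Mb j / \<tau> j) ` {1..N})"

definition accept_prob ::
  "nat \<Rightarrow> (nat \<Rightarrow> 'a \<Rightarrow> real) \<Rightarrow> ('a \<Rightarrow> real) \<Rightarrow> (nat \<Rightarrow> 'a \<Rightarrow> real)
     \<Rightarrow> (nat \<Rightarrow> real) \<Rightarrow> (nat \<Rightarrow> real) \<Rightarrow> nat \<Rightarrow> 'a \<Rightarrow> real" where
  "accept_prob N a b \<rho> Mb \<tau> j x = a j x * b x / (Mmax N Mb \<tau> * \<tau> j * \<rho> j x)"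

definition avg_accept ::
  "'a measure \<Rightarrow> nat \<Rightarrow> (nat \<Rightarrow> 'a \<Rightarrow> real) \<Rightarrow> ('a \<Rightarrow> real) \<Rightarrow> (nat \<Rightarrow> 'a \<Rightarrow> real)
     \<Rightarrow> (nat \<Rightarrow> real) \<Rightarrow> (nat \<Rightarrow> real) \<Rightarrow> real" where
  "avg_accept \<mu> N a b \<rho> Mb \<tau> =
     (\<Sum>j=1..N. \<integral>x. accept_prob N a b \<rho> Mb \<tau> j x * \<tau> j * \<rho> j x \<partial>\<mu>)"

end

theory Submission
  imports Defs
begin

theorem lemma1:
  fixes \<mu> :: "'a measure" and N :: nat
    and a :: "nat \<Rightarrow> 'a \<Rightarrow> real" and b :: "'a \<Rightarrow> real"
    and \<rho> :: "nat \<Rightarrow> 'a \<Rightarrow> real" and Mb :: "nat \<Rightarrow> real" and \<tau> :: "nat \<Rightarrow> real"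
    and \<beta> :: "nat \<Rightarrow> real"
  assumes N: "N \<ge> 1"
    and a_meas: "\<And>j. j \<in> {1..N} \<Longrightarrow> a j \<in> borel_measurable \<mu>"
    and a_nonneg: "\<And>j x. j \<in> {1..N} \<Longrightarrow> x \<in> space \<mu> \<Longrightarrow> a j x \<ge> 0"
    and a_int: "\<And>j. j \<in> {1..N} \<Longrightarrow> integrable \<mu> (a j)"
    and a_dens: "\<And>j. j \<in> {1..N} \<Longrightarrow> (\<integral>x. a j x \<partial>\<mu>) = 1"
    and b_meas: "b \<in> borel_measurable \<mu>"
    and b_nonneg: "\<And>x. x \<in> space \<mu> \<Longrightarrow> b x \<ge> 0"
    and ab_int: "\<And>j. j \<in> {1..N} \<Longrightarrow> integrable \<mu> (\<lambda>x. a j x * b x)"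
    and \<beta>_def: "\<And>j. j \<in> {1..N} \<Longrightarrow> \<beta> j = (\<integral>x. a j x * b x \<partial>\<mu>)"
    and \<beta>_pos: "(\<Sum>j=1..N. \<beta> j) > 0"
    and \<rho>_meas: "\<And>j. j \<in> {1..N} \<Longrightarrow> \<rho> j \<in> borel_measurable \<mu>"
    and \<rho>_nonneg: "\<And>j x. j \<in> {1..N} \<Longrightarrow> x \<in> space \<mu> \<Longrightarrow> \<rho> j x \<ge> 0"
    and \<rho>_int: "\<And>j. j \<in> {1..N} \<Longrightarrow> integrable \<mu> (\<rho> j)"
    and \<rho>_dens: "\<And>j. j \<in> {1..N} \<Longrightarrow> (\<integral>x. \<rho> j x \<partial>\<mu>) = 1"
    and M_bound: "\<And>j x. j \<in> {1..N} \<Longrightarrow> x \<in> space \<mu> \<Longrightarrow> a j x * b x \<le> Mb j * \<rho> j x"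
    and \<tau>_pos: "\<And>j. j \<in> {1..N} \<Longrightarrow> \<tau> j > 0"
    and \<tau>_sum: "(\<Sum>j=1..N. \<tau> j) = 1"
  shows "avg_accept \<mu> N a b \<rho> Mb \<tau> \<le> (\<Sum>j=1..N. \<beta> j) / (\<Sum>j=1..N. Mb j)
       \<and> (avg_accept \<mu> N a b \<rho> Mb \<tau> = (\<Sum>j=1..N. \<beta> j) / (\<Sum>j=1..N. Mb j)
            \<longleftrightarrow> (\<exists>c. \<forall>j\<in>{1..N}. \<tau> j = c * Mb j))"
proof -
  define M where "M = Mmax N Mb \<tau>"
  define S where "S = (\<Sum>j=1..N. Mb j)"
  define B where "B = (\<Sum>j=1..N. \<beta> j)"
  have fin: "finite ((\<lambda>j. Mb j / \<tau> j) ` {1..N})" by simp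
  have ne: "(\<lambda>j. Mb j / \<tau> j) ` {1..N} \<noteq> {}" using N by auto
  have Mge: "Mb j / \<tau> j \<le> M" if "j \<in> {1..N}" for j
    unfolding M_def Mmax_def using fin that by (intro Max_ge) auto
  have Min: "M \<in> (\<lambda>j. Mb j / \<tau> j) ` {1..N}"
    unfolding M_def Mmax_def using fin ne by (rule Max_in)
  have bM: "\<beta> j \<le> Mb j" if j: "j \<in> {1..N}" for j
  proof -
    have "\<beta> j = (\<integral>x. a j x * b x \<partial>\<mu>)" using \<beta>_def j by simp
    also have "\<dots> \<le> (\<integral>x. Mb j * \<rho> j x \<partial>\<mu>)"
      using j ab_int \<rho>_int M_bound by (intro integral_mono) auto
    also have "\<dots> = Mb j" using \<rho>_dens j by simp
    finally show ?thesis .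
  qed
  have BS: "B \<le> S" unfolding B_def S_def using bM by (intro sum_mono) auto
  have SM: "S \<le> M"
  proof -
    have "S = (\<Sum>j=1..N. \<tau> j * (Mb j / \<tau> j))"
      unfolding S_def using \<tau>_pos by (intro sum.cong) (auto simp: less_imp_neq[symmetric])
    also have "\<dots> \<le> (\<Sum>j=1..N. \<tau> j * M)"
      using \<tau>_pos Mge by (intro sum_mono mult_left_mono) (auto intro: less_imp_le)
    also have "\<dots> = M" using \<tau>_sum by (simp add: sum_distrib_right[symmetric])
    finally show ?thesis .
  qed
  have Bpos: "B > 0" using \<beta>_pos B_def by simp
  have Spos: "S > 0" using Bpos BS by simp
  have Mpos: "M > 0" using Spos SM by simp
  have pt: "accept_prob N a b \<rho> Mb \<tau> j x * \<tau> j * \<rho> j x = a j x * b x / M"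
    if j: "j \<in> {1..N}" and x: "x \<in> space \<mu>" for j x
  proof (cases "\<rho> j x = 0")
    case True
    have "a j x * b x \<le> 0" using M_bound[OF j x] True by simp
    moreover have "a j x * b x \<ge> 0" using a_nonneg[OF j x] b_nonneg[OF x] by simp
    ultimately have "a j x * b x = 0" by simp
    then show ?thesis using True by (simp add: accept_prob_def)
  next
    case False
    then show ?thesis using \<tau>_pos[OF j] Mpos
      by (simp add: accept_prob_def M_def[symmetric] field_simps)
  qed
  have avg: "avg_accept \<mu> N a b \<rho> Mb \<tau> = B / M"
  proof -
    have "avg_accept \<mu> N a b \<rho> Mb \<tau> = (\<Sum>j=1..N. \<beta> j / M)"
      unfolding avg_accept_def
    proof (intro sum.cong refl)
      fix j assume j: "j \<in> {1..N}"
      have "(\<integral>x. accept_prob N a b \<rho> Mb \<tau> j x * \<tau> j * \<rho> j x \<partial>\<mu>) = (\<integral>x. a j x * b x / M \<partial>\<mu>)"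
        using pt j by (intro Bochner_Integration.integral_cong) auto
      also have "\<dots> = \<beta> j / M" using \<beta>_def[OF j] by simp
      finally show "(\<integral>x. accept_prob N a b \<rho> Mb \<tau> j x * \<tau> j * \<rho> j x \<partial>\<mu>) = \<beta> j / M" .
    qed
    also have "\<dots> = B / M" unfolding B_def by (simp add: sum_divide_distrib)
    finally show ?thesis .
  qed
  have le: "B / M \<le> B / S" using Bpos Spos SM by (intro divide_left_mono) auto
  have eqiff: "B / M = B / S \<longleftrightarrow> M = S" using Bpos Spos Mpos by (auto simp: field_simps)
  have cond: "M = S \<longleftrightarrow> (\<exists>c. \<forall>j\<in>{1..N}. \<tau> j = c * Mb j)"
  proof
    assume MS: "M = S"
    have "(\<Sum>j=1..N. \<tau> j * (M - Mb j / \<tau> j)) = (\<Sum>j=1..N. \<tau> j * M) - (\<Sum>j=1..N. \<tau> j * (Mb j / \<tau> j))"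
      by (simp add: right_diff_distrib sum_subtractf)
    also have "\<dots> = M - S"
    proof -
      have "(\<Sum>j=1..N. \<tau> j * (Mb j / \<tau> j)) = S"
        unfolding S_def using \<tau>_pos by (intro sum.cong) (auto simp: less_imp_neq[symmetric])
      moreover have "(\<Sum>j=1..N. \<tau> j * M) = M" using \<tau>_sum by (simp add: sum_distrib_right[symmetric])
      ultimately show ?thesis by simp
    qed
    finally have "(\<Sum>j=1..N. \<tau> j * (M - Mb j / \<tau> j)) = 0" using MS by simp
    moreover have "\<forall>j\<in>{1..N}. 0 \<le> \<tau> j * (M - Mb j / \<tau> j)"
      using \<tau>_pos Mge by (metis atLeastAtMost_iff diff_ge_0_iff_ge less_imp_le mult_nonneg_nonneg)
    ultimately have "\<forall>j\<in>{1..N}. \<tau> j * (M - Mb j / \<tau> j) = 0"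
      by (subst sum_nonneg_eq_0_iff[symmetric]) auto
    have "\<forall>j\<in>{1..N}. \<tau> j = (1 / M) * Mb j"
    proof
      fix j assume j: "j \<in> {1..N}"
      have t: "\<tau> j > 0" using \<tau>_pos[OF j] .
      have "\<tau> j * (M - Mb j / \<tau> j) = 0" using \<open>\<forall>j\<in>{1..N}. \<tau> j * (M - Mb j / \<tau> j) = 0\<close> j by blast
      then have "\<tau> j * M = Mb j" using t by (simp add: right_diff_distrib)
      then show "\<tau> j = (1 / M) * Mb j" using Mpos by (simp add: field_simps)
    qed
    then show "\<exists>c. \<forall>j\<in>{1..N}. \<tau> j = c * Mb j" by blast
  next
    assume "\<exists>c. \<forall>j\<in>{1..N}. \<tau> j = c * Mb j"
    then obtain c where c: "\<And>j. j \<in> {1..N} \<Longrightarrow> \<tau> j = c * Mb j" by blast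
    have "1 \<in> {1..N}" using N by simp
    then have c0: "c \<noteq> 0" using c[of 1] \<tau>_pos[of 1] by auto
    have q: "Mb j / \<tau> j = 1 / c" if "j \<in> {1..N}" for j
      using c[OF that] \<tau>_pos[OF that] c0 by (auto simp: field_simps)
    have "M = 1 / c" using Min q by auto
    moreover have "S = 1 / c"
    proof -
      have "S = (\<Sum>j=1..N. \<tau> j / c)" unfolding S_def using c c0 by (intro sum.cong) auto
      also have "\<dots> = 1 / c" using \<tau>_sum by (simp add: sum_divide_distrib[symmetric])
      finally show ?thesis .
    qed
    ultimately show "M = S" by simp
  qed
  show ?thesis using avg le eqiff cond unfolding B_def S_def by simp
qed

end
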